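(* Let $n>2k$ and $1\le s\le k$. Then $g(n,k,s)=|\mathcal K(n,k,s)|$, where $$\mathcal K(n,k,s)=\Big\{K\in\binom{[n]}{k}:1\in K,\ |K\cap[2,k+s-1]|\ge s-1\Big\}\cup\binom{[2,k+s-1]}{k}.$$
   Context: $[a,b]=\{a,\dots,b\}$. A family is intersecting if any two members intersect. $\tau(\mathcal F)$ is the minimum size of a set meeting every member of $\mathcal F$. Writing sets increasingly, $(a_1,\dots,a_k)\prec(b_1,\dots,b_k)$ iff $a_i\le b_i$ for all $i$; $\mathcal F\subset\binom{[n]}{k}$ is initial if $A\prec B\in\mathcal F$ implies $A\in\mathcal F$. $g(n,k,s)=\max\{|\mathcal F|:\mathcal F\subset\binom{[n]}{k}\text{ intersecting, initial, }\tau(\mathcal F)\ge s\}$. *)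

theory Defs
  imports Main
begin

definition ksets :: "nat set \<Rightarrow> nat \<Rightarrow> nat set set" where
  "ksets X k = {A. A \<subseteq> X \<and> card A = k}"

definition intersecting :: "nat set set \<Rightarrow> bool" where
  "intersecting F \<longleftrightarrow> (\<forall>A\<in>F. \<forall>B\<in>F. A \<inter> B \<noteq> {})"

definition tau :: "nat \<Rightarrow> nat set set \<Rightarrow> nat" where
  "tau n F = Inf {card T | T. T \<subseteq> {1..n} \<and> (\<forall>A\<in>F. T \<inter> A \<noteq> {})}"

definition shift_le :: "nat set \<Rightarrow> nat set \<Rightarrow> bool" where
  "shift_le A B \<longleftrightarrow> card A = card B \<and>
     (\<forall>i < card A. sorted_list_of_set A ! i \<le> sorted_list_of_set B ! i)"

definition initial :: "nat \<Rightarrow> nat \<Rightarrow> nat set set \<Rightarrow> bool" where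
  "initial n k F \<longleftrightarrow> (\<forall>A\<in>ksets {1..n} k. \<forall>B\<in>F. shift_le A B \<longrightarrow> A \<in> F)"

definition g :: "nat \<Rightarrow> nat \<Rightarrow> nat \<Rightarrow> nat" where
  "g n k s = Max {card F | F. F \<subseteq> ksets {1..n} k \<and> intersecting F \<and> initial n k F
                              \<and> tau n F \<ge> s}"

definition Kfam :: "nat \<Rightarrow> nat \<Rightarrow> nat \<Rightarrow> nat set set" where
  "Kfam n k s = {K \<in> ksets {1..n} k. 1 \<in> K \<and> card (K \<inter> {2..k+s-1}) \<ge> s - 1}
                \<union> ksets {2..k+s-1} k"

end

theory Submission
  imports Defs
begin


lemma count_nth:
  assumes "finite X" "i < card X"
  shows "(sorted_list_of_set X ! i \<le> t) \<longleftrightarrow> (i < card (X \<inter> {..t}))"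
proof -
  define xs where "xs = sorted_list_of_set X"
  have len: "length xs = card X" using assms by (simp add: xs_def)
  have srt: "sorted xs" and dst: "distinct xs" and st: "set xs = X"
    using assms by (simp_all add: xs_def)
  show ?thesis unfolding xs_def[symmetric]
  proof
    assume le: "xs ! i \<le> t"
    have sub: "(\<lambda>j. xs ! j) ` {..i} \<subseteq> X \<inter> {..t}"
    proof
      fix y assume "y \<in> (\<lambda>j. xs ! j) ` {..i}"
      then obtain j where j: "j \<le> i" "y = xs ! j" by auto
      have "xs ! j \<le> xs ! i" using srt j assms len by (simp add: sorted_nth_mono)
      moreover have "xs ! j \<in> X" using st j assms len by (metis le_less_trans nth_mem)
      ultimately show "y \<in> X \<inter> {..t}" using j le by auto
    qed
    have inj: "inj_on (\<lambda>j. xs ! j) {..i}"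
      using dst assms len by (auto simp: inj_on_def nth_eq_iff_index_eq)
    have "card ((\<lambda>j. xs ! j) ` {..i}) = Suc i" using inj by (simp add: card_image)
    moreover have "card ((\<lambda>j. xs ! j) ` {..i}) \<le> card (X \<inter> {..t})"
      using sub assms by (intro card_mono) auto
    ultimately show "i < card (X \<inter> {..t})" by simp
  next
    assume lt: "i < card (X \<inter> {..t})"
    show "xs ! i \<le> t"
    proof (rule ccontr)
      assume "\<not> xs ! i \<le> t"
      hence gt: "t < xs ! i" by simp
      have "X \<inter> {..t} \<subseteq> (\<lambda>j. xs ! j) ` {..<i}"
      proof
        fix y assume y: "y \<in> X \<inter> {..t}"
        then obtain j where j: "j < length xs" "y = xs ! j" using st by (metis IntD1 in_set_conv_nth)
        have "j < i"
        proof (rule ccontr)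
          assume "\<not> j < i"
          hence "xs ! i \<le> xs ! j" using srt j by (simp add: sorted_nth_mono)
          thus False using gt y j by auto
        qed
        thus "y \<in> (\<lambda>j. xs ! j) ` {..<i}" using j by auto
      qed
      hence "card (X \<inter> {..t}) \<le> card ((\<lambda>j. xs ! j) ` {..<i})" by (intro card_mono) auto
      also have "\<dots> \<le> i" using card_image_le[of "{..<i}" "\<lambda>j. xs ! j"] by simp
      finally show False using lt by simp
    qed
  qed
qed

definition sh :: "nat set \<Rightarrow> nat set \<Rightarrow> bool" where
  "sh A B \<longleftrightarrow> card A = card B \<and> (\<forall>t. card (B \<inter> {..t}) \<le> card (A \<inter> {..t}))"

lemma shift_le_iff:
  assumes "finite A" "finite B"
  shows "shift_le A B \<longleftrightarrow> sh A B"
proof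
  assume h: "shift_le A B"
  hence c: "card A = card B" by (simp add: shift_le_def)
  show "sh A B" unfolding sh_def
  proof (intro conjI allI c)
    fix t
    show "card (B \<inter> {..t}) \<le> card (A \<inter> {..t})"
    proof (cases "card (B \<inter> {..t})")
      case 0 then show ?thesis by simp
    next
      case (Suc c')
      have cb: "card (B \<inter> {..t}) \<le> card B" using assms by (intro card_mono) auto
      hence "c' < card B" using Suc by simp
      hence "sorted_list_of_set B ! c' \<le> t" using count_nth[OF assms(2)] Suc by simp
      moreover have "sorted_list_of_set A ! c' \<le> sorted_list_of_set B ! c'"
        using h \<open>c' < card B\<close> c by (simp add: shift_le_def)
      ultimately have "sorted_list_of_set A ! c' \<le> t" by linarith
      hence "c' < card (A \<inter> {..t})" using count_nth[OF assms(1), of c' t] \<open>c' < card B\<close> c by simp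
      thus ?thesis using Suc by simp
    qed
  qed
next
  assume h: "sh A B"
  hence c: "card A = card B" by (simp add: sh_def)
  show "shift_le A B" unfolding shift_le_def
  proof (intro conjI allI impI c)
    fix i assume i: "i < card A"
    define t where "t = sorted_list_of_set B ! i"
    have "i < card (B \<inter> {..t})" using count_nth[OF assms(2), of i t] i c by (simp add: t_def)
    also have "\<dots> \<le> card (A \<inter> {..t})" using h by (simp add: sh_def)
    finally show "sorted_list_of_set A ! i \<le> sorted_list_of_set B ! i"
      using count_nth[OF assms(1), of i t] i by (simp add: t_def)
  qed
qed



definition dn :: "nat \<Rightarrow> nat \<Rightarrow> nat set set \<Rightarrow> bool" where
  "dn n k F \<longleftrightarrow> (\<forall>A\<in>ksets {1..n} k. \<forall>B\<in>F. sh A B \<longrightarrow> A \<in> F)"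

lemma ksets_finite: "A \<in> ksets {1..n} k \<Longrightarrow> finite A"
  by (auto simp: ksets_def intro: finite_subset)

lemma initial_dn: "F \<subseteq> ksets {1..n} k \<Longrightarrow> initial n k F \<longleftrightarrow> dn n k F"
  unfolding initial_def dn_def using shift_le_iff ksets_finite by blast

lemma sh_insert_big:
  assumes "sh A B" "finite A" "finite B" "x \<notin> A" "x \<notin> B"
  shows "sh (insert x A) (insert x B)"
  unfolding sh_def
proof (intro conjI allI)
  show "card (insert x A) = card (insert x B)" using assms by (simp add: sh_def)
next
  fix t
  have "card (B \<inter> {..t}) \<le> card (A \<inter> {..t})" using assms by (simp add: sh_def)
  thus "card (insert x B \<inter> {..t}) \<le> card (insert x A \<inter> {..t})"
    using assms by (cases "x \<le> t") auto
qed

lemma sh_replace: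
  assumes "finite G" "x \<notin> G" "y \<notin> G" "x \<le> y"
  shows "sh (insert x G) (insert y G)"
  unfolding sh_def
proof (intro conjI allI)
  show "card (insert x G) = card (insert y G)" using assms by simp
next
  fix t
  show "card (insert y G \<inter> {..t}) \<le> card (insert x G \<inter> {..t})"
    using assms by (cases "y \<le> t"; cases "x \<le> t") auto
qed

lemma intersecting_empty_k0: "intersecting F \<Longrightarrow> F \<subseteq> ksets X 0 \<Longrightarrow> finite X \<Longrightarrow> F = {}"
proof (rule ccontr)
  assume h: "intersecting F" "F \<subseteq> ksets X 0" "finite X" "F \<noteq> {}"
  then obtain x where x: "x \<in> F" by auto
  hence "x \<subseteq> X" "card x = 0" using h by (auto simp: ksets_def)
  hence "x = {}" using h(3) finite_subset by (metis card_0_eq)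
  thus False using h(1) x unfolding intersecting_def by blast
qed

lemma mem_pred: "(x::nat) \<in> {1..n} \<Longrightarrow> x \<noteq> n \<Longrightarrow> x \<in> {1..n-1}" by auto

lemma split_card:
  assumes "finite F"
  shows "card F = card {A\<in>F. n \<notin> A} + card ((\<lambda>A. A - {n}) ` {A\<in>F. n \<in> A})"
proof -
  have inj: "inj_on (\<lambda>A. A - {n}) {A\<in>F. n \<in> A}"
    by (auto simp: inj_on_def)
  have "F = {A\<in>F. n \<notin> A} \<union> {A\<in>F. n \<in> A}" by auto
  hence "card F = card {A\<in>F. n \<notin> A} + card {A\<in>F. n \<in> A}"
    using assms by (metis (no_types, lifting) card_Un_disjoint disjoint_iff finite_Un mem_Collect_eq)
  thus ?thesis using card_image[OF inj] by simp
qed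

lemma F1_props:
  assumes "F \<subseteq> ksets {1..n} k" "dn n k F" "intersecting F"
  shows "{A\<in>F. n \<notin> A} \<subseteq> ksets {1..n-1} k" "dn (n-1) k {A\<in>F. n \<notin> A}"
        "intersecting {A\<in>F. n \<notin> A}"
proof -
  show "{A\<in>F. n \<notin> A} \<subseteq> ksets {1..n-1} k"
  proof
    fix A assume A: "A \<in> {A\<in>F. n \<notin> A}"
    hence "A \<subseteq> {1..n}" "card A = k" "n \<notin> A" using assms(1) by (auto simp: ksets_def)
    hence "A \<subseteq> {1..n-1}" using mem_pred by blast
    thus "A \<in> ksets {1..n-1} k" using \<open>card A = k\<close> by (simp add: ksets_def)
  qed
  show "dn (n-1) k {A\<in>F. n \<notin> A}" unfolding dn_def
  proof (intro ballI impI)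
    fix A B assume A: "A \<in> ksets {1..n-1} k" and B: "B \<in> {A\<in>F. n \<notin> A}" and s: "sh A B"
    have "A \<subseteq> {1..n-1}" "card A = k" using A by (auto simp: ksets_def)
    moreover have "{1..n-1} \<subseteq> {1..n}" by auto
    moreover have "n \<notin> {1..n-1}" by auto
    ultimately have A': "A \<in> ksets {1..n} k" "n \<notin> A" unfolding ksets_def by blast+
    have "A \<in> F" using assms(2) A'(1) B s unfolding dn_def by blast
    thus "A \<in> {A\<in>F. n \<notin> A}" using A'(2) by simp
  qed
  show "intersecting {A\<in>F. n \<notin> A}" using assms(3) by (auto simp: intersecting_def)
qed

lemma F2_props:
  assumes "F \<subseteq> ksets {1..n} k" "dn n k F" "intersecting F" "k \<ge> 1" "2*k \<le> n"
  defines "F2 \<equiv> (\<lambda>A. A - {n}) ` {A\<in>F. n \<in> A}"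
  shows "F2 \<subseteq> ksets {1..n-1} (k-1)" "dn (n-1) (k-1) F2" "intersecting F2"
        "\<And>B. B \<in> F2 \<Longrightarrow> insert n B \<in> F \<and> n \<notin> B"
proof -
  show mem: "\<And>B. B \<in> F2 \<Longrightarrow> insert n B \<in> F \<and> n \<notin> B" unfolding F2_def by (auto simp: insert_absorb)
  show sub: "F2 \<subseteq> ksets {1..n-1} (k-1)"
  proof
    fix B assume "B \<in> F2"
    then obtain A where A: "A \<in> F" "n \<in> A" "B = A - {n}" unfolding F2_def by auto
    have "A \<subseteq> {1..n}" "card A = k" using A assms(1) by (auto simp: ksets_def)
    hence "B \<subseteq> {1..n-1}" "card B = k - 1" using A mem_pred
      by (auto dest: finite_subset)
    thus "B \<in> ksets {1..n-1} (k-1)" by (simp add: ksets_def)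
  qed
  show "dn (n-1) (k-1) F2" unfolding dn_def
  proof (intro ballI impI)
    fix A B assume A: "A \<in> ksets {1..n-1} (k-1)" and B: "B \<in> F2" and s: "sh A B"
    have "insert n B \<in> F" "n \<notin> B" using mem[OF B] by auto
    have fA: "finite A" using A ksets_finite by blast
    have fB: "finite B" using sub B ksets_finite by blast
    have nA: "n \<notin> A" using A assms(4,5) by (auto simp: ksets_def)
    have "A \<subseteq> {1..n-1}" using A by (simp add: ksets_def)
    moreover have "{1..n-1} \<subseteq> {1..n}" by auto
    ultimately have "A \<subseteq> {1..n}" by blast
    hence "insert n A \<in> ksets {1..n} k" using A nA fA assms(4,5) by (auto simp: ksets_def)
    moreover have "sh (insert n A) (insert n B)" using sh_insert_big[OF s fA fB nA \<open>n \<notin> B\<close>] .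
    ultimately have "insert n A \<in> F" using assms(2) \<open>insert n B \<in> F\<close> by (auto simp: dn_def)
    thus "A \<in> F2" unfolding F2_def using nA by (auto intro!: image_eqI[where x="insert n A"])
  qed
  show "intersecting F2" unfolding intersecting_def
  proof (intro ballI notI)
    fix G G' assume G: "G \<in> F2" and G': "G' \<in> F2" and d: "G \<inter> G' = {}"
    have GF: "insert n G \<in> F" "n \<notin> G" and G'F: "insert n G' \<in> F" "n \<notin> G'" using mem G G' by auto
    have kG: "G \<in> ksets {1..n-1} (k-1)" "G' \<in> ksets {1..n-1} (k-1)" using sub G G' by auto
    hence "card (G \<union> G') \<le> 2*k - 2" using card_Un_le[of G G'] by (auto simp: ksets_def)
    moreover have "G \<union> G' \<subseteq> {1..n-1}" using kG by (auto simp: ksets_def)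
    have "\<not> {1..n-1} \<subseteq> G \<union> G'"
    proof
      assume "{1..n-1} \<subseteq> G \<union> G'"
      hence "card {1..n-1} \<le> card (G \<union> G')" using kG ksets_finite by (intro card_mono) auto
      thus False using \<open>card (G \<union> G') \<le> 2*k - 2\<close> assms(4,5) by simp
    qed
    then obtain x where x: "x \<in> {1..n-1}" "x \<notin> G" "x \<notin> G'" by blast
    have fG': "finite G'" using kG ksets_finite by blast
    have "G' \<subseteq> {1..n-1}" using kG by (simp add: ksets_def)
    moreover have "{1..n-1} \<subseteq> {1..n}" by auto
    ultimately have "insert x G' \<subseteq> {1..n}" using x by blast
    hence "insert x G' \<in> ksets {1..n} k" using kG x fG' assms(4) by (auto simp: ksets_def)
    moreover have "sh (insert x G') (insert n G')" using sh_replace[OF fG' x(3) G'F(2)] x by auto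
    ultimately have "insert x G' \<in> F" using assms(2) G'F by (auto simp: dn_def)
    moreover have "insert n G \<inter> insert x G' = {}" using d x GF G'F by auto
    ultimately show False using assms(3) GF unfolding intersecting_def by blast
  qed
qed



definition Tset :: "nat \<Rightarrow> nat \<Rightarrow> nat \<Rightarrow> nat \<Rightarrow> nat set set" where
  "Tset n k m s = {A \<in> ksets {1..n} k. 1 \<in> A \<and> s \<le> card (A \<inter> {1..m})}"

lemma finite_ksets: "finite (ksets {1..n} k)"
  by (rule finite_subset[of _ "Pow {1..n}"]) (auto simp: ksets_def)

lemma finite_Tset: "finite (Tset n k m s)"
  by (rule finite_subset[OF _ finite_ksets]) (auto simp: Tset_def)

lemma card_insert_inter:
  assumes "finite B" "n \<notin> B" "n \<ge> 1"
  shows "card (insert n B \<inter> {1..m}) = (if n \<le> m then Suc (card (B \<inter> {1..m})) else card (B \<inter> {1..m}))"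
proof (cases "n \<le> m")
  case True
  hence "insert n B \<inter> {1..m} = insert n (B \<inter> {1..m})" using assms by auto
  thus ?thesis using True assms by simp
next
  case False
  hence "insert n B \<inter> {1..m} = B \<inter> {1..m}" by auto
  thus ?thesis using False by simp
qed

lemma Tset_split:
  fixes n k m s :: nat
  assumes "n \<ge> 2" "k \<ge> 1"
  defines "s' \<equiv> (if n \<le> m then s - 1 else s)"
  shows "card (Tset n k m s) = card (Tset (n-1) k m s) + card (Tset (n-1) (k-1) m s')"
proof -
  have eq: "Tset n k m s = Tset (n-1) k m s \<union> insert n ` Tset (n-1) (k-1) m s'"
  proof (intro equalityI subsetI)
    fix A assume A: "A \<in> Tset n k m s"
    hence A1: "A \<subseteq> {1..n}" "card A = k" "1 \<in> A" "s \<le> card (A \<inter> {1..m})"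
      by (auto simp: Tset_def ksets_def)
    have fA: "finite A" using A1 finite_subset by blast
    show "A \<in> Tset (n-1) k m s \<union> insert n ` Tset (n-1) (k-1) m s'"
    proof (cases "n \<in> A")
      case False
      hence "A \<subseteq> {1..n-1}" using A1 mem_pred by blast
      thus ?thesis using A1 by (auto simp: Tset_def ksets_def)
    next
      case True
      define B where "B = A - {n}"
      have AB: "A = insert n B" "n \<notin> B" using True by (auto simp: B_def)
      have fB: "finite B" using fA by (simp add: B_def)
      have "B \<subseteq> {1..n-1}" using A1 mem_pred by (auto simp: B_def)
      moreover have "card B = k - 1" using A1 True fA by (simp add: B_def)
      moreover have "1 \<in> B" using A1 assms(1) by (auto simp: B_def)
      moreover have "s' \<le> card (B \<inter> {1..m})"
        using A1(4) card_insert_inter[OF fB AB(2), of m] assms(1) AB(1) by (auto simp: s'_def)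
      ultimately have "B \<in> Tset (n-1) (k-1) m s'" by (auto simp: Tset_def ksets_def)
      thus ?thesis using AB by auto
    qed
  next
    fix A assume "A \<in> Tset (n-1) k m s \<union> insert n ` Tset (n-1) (k-1) m s'"
    thus "A \<in> Tset n k m s"
    proof
      assume A: "A \<in> Tset (n-1) k m s"
      have "{1..n-1} \<subseteq> {1..n}" by auto
      moreover have "A \<subseteq> {1..n-1}" using A by (simp add: Tset_def ksets_def)
      ultimately have "A \<subseteq> {1..n}" by blast
      thus ?thesis using A by (simp add: Tset_def ksets_def)
    next
      assume "A \<in> insert n ` Tset (n-1) (k-1) m s'"
      then obtain B where B: "B \<in> Tset (n-1) (k-1) m s'" "A = insert n B" by auto
      have B1: "B \<subseteq> {1..n-1}" "card B = k - 1" "1 \<in> B" "s' \<le> card (B \<inter> {1..m})"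
        using B by (auto simp: Tset_def ksets_def)
      have fB: "finite B" using B1 finite_subset by blast
      have nB: "n \<notin> B" using B1 assms(1) by auto
      have "{1..n-1} \<subseteq> {1..n}" by auto
      hence "B \<subseteq> {1..n}" using B1 by blast
      hence "A \<subseteq> {1..n}" using B assms(1) by auto
      moreover have "card A = k" using B fB nB B1 assms(2) by simp
      moreover have "1 \<in> A" using B B1 by auto
      moreover have "s \<le> card (A \<inter> {1..m})"
        using B1(4) card_insert_inter[OF fB nB, of m] assms(1) B(2) by (auto simp: s'_def split: if_splits)
      ultimately show ?thesis by (auto simp: Tset_def ksets_def)
    qed
  qed
  have disj: "Tset (n-1) k m s \<inter> insert n ` Tset (n-1) (k-1) m s' = {}"
    using assms(1) by (auto simp: Tset_def ksets_def)
  have inj: "inj_on (insert n) (Tset (n-1) (k-1) m s')"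
  proof (rule inj_onI)
    fix X Y assume X: "X \<in> Tset (n-1) (k-1) m s'" and Y: "Y \<in> Tset (n-1) (k-1) m s'"
      and e: "insert n X = insert n Y"
    have "n \<notin> X" "n \<notin> Y" using X Y assms(1) by (auto simp: Tset_def ksets_def)
    thus "X = Y" using e by (metis insert_ident)
  qed
  show ?thesis unfolding eq
    by (subst card_Un_disjoint[OF finite_Tset finite_imageI[OF finite_Tset] disj])
       (use card_image[OF inj] in simp)
qed

lemma R_base:
  assumes "n = 2*k" "k \<ge> 1" "k + s \<le> m" "F \<subseteq> ksets {1..n} k" "intersecting F"
    "\<forall>A\<in>F. s \<le> card (A \<inter> {1..m})"
  shows "card F \<le> card (Tset n k m s)"
proof -
  define \<psi> where "\<psi> A = (if 1 \<in> A then A else {1..n} - A)" for A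
  have map: "\<psi> A \<in> Tset n k m s" if A: "A \<in> F" for A
  proof (cases "1 \<in> A")
    case True thus ?thesis using A assms by (auto simp: \<psi>_def Tset_def)
  next
    case False
    have A1: "A \<subseteq> {1..n}" "card A = k" "s \<le> card (A \<inter> {1..m})" using A assms by (auto simp: ksets_def)
    have fA: "finite A" using A1 finite_subset by blast
    have ks: "s \<le> k" using A1 card_mono[OF fA, of "A \<inter> {1..m}"] by auto
    define C where "C = {1..n} - A"
    have cC: "card C = k" using A1 fA assms(1) by (simp add: C_def card_Diff_subset)
    have "C - {1..m} \<subseteq> {m+1..n}" by (auto simp: C_def)
    hence "card (C - {1..m}) \<le> n - m" using card_mono[of "{m+1..n}"] by fastforce
    moreover have "card C = card (C \<inter> {1..m}) + card (C - {1..m})"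
      by (metis C_def Int_Diff_Un Int_Diff_disjoint card_Un_disjoint finite_Diff finite_Int finite_atLeastAtMost)
    ultimately have "s \<le> card (C \<inter> {1..m})" using cC ks assms(1,3) by linarith
    moreover have "1 \<in> C" using False assms by (auto simp: C_def)
    moreover have "C \<subseteq> {1..n}" by (auto simp: C_def)
    ultimately show ?thesis using False cC by (auto simp: \<psi>_def Tset_def ksets_def C_def)
  qed
  have inj: "inj_on \<psi> F"
  proof (rule inj_onI)
    fix A B assume A: "A \<in> F" and B: "B \<in> F" and e: "\<psi> A = \<psi> B"
    have sA: "A \<subseteq> {1..n}" "B \<subseteq> {1..n}" using A B assms(4) by (auto simp: ksets_def)
    have AB: "A \<inter> B \<noteq> {}" using A B assms(5) by (auto simp: intersecting_def)
    show "A = B"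
    proof (cases "1 \<in> A"; cases "1 \<in> B")
      assume "1 \<in> A" "1 \<in> B" thus ?thesis using e by (simp add: \<psi>_def)
    next
      assume "1 \<in> A" "1 \<notin> B"
      hence "A = {1..n} - B" using e by (simp add: \<psi>_def)
      thus ?thesis using AB by auto
    next
      assume "1 \<notin> A" "1 \<in> B"
      hence "B = {1..n} - A" using e by (simp add: \<psi>_def)
      thus ?thesis using AB by auto
    next
      assume "1 \<notin> A" "1 \<notin> B"
      hence "{1..n} - A = {1..n} - B" using e by (simp add: \<psi>_def)
      thus ?thesis using sA by (metis Diff_Diff_Int inf.absorb_iff2)
    qed
  qed
  have "card F = card (\<psi> ` F)" using card_image[OF inj] by simp
  also have "\<dots> \<le> card (Tset n k m s)" using map by (intro card_mono[OF finite_Tset]) auto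
  finally show ?thesis .
qed

lemma R_main:
  "\<And>k s F. 2*k \<le> n \<Longrightarrow> k + s \<le> m \<Longrightarrow> F \<subseteq> ksets {1..n} k \<Longrightarrow> intersecting F \<Longrightarrow> dn n k F
    \<Longrightarrow> (\<forall>A\<in>F. s \<le> card (A \<inter> {1..m})) \<Longrightarrow> card F \<le> card (Tset n k m s)"
proof (induction n)
  case 0
  hence "F = {}" using intersecting_empty_k0[of F "{1..0}"] by simp
  thus ?case by simp
next
  case (Suc n)
  show ?case
  proof (cases "k = 0")
    case True
    hence "F = {}" using intersecting_empty_k0[of F "{1..Suc n}"] Suc.prems by simp
    thus ?thesis by simp
  next
    case k: False
    show ?thesis
    proof (cases "Suc n = 2*k")
      case True thus ?thesis using R_base Suc.prems k by simp
    next
      case False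
      hence big: "2*k + 1 \<le> Suc n" using Suc.prems by simp
      define F1 where "F1 = {A\<in>F. Suc n \<notin> A}"
      define F2 where "F2 = (\<lambda>A. A - {Suc n}) ` {A\<in>F. Suc n \<in> A}"
      define s' where "s' = (if Suc n \<le> m then s - 1 else s)"
      have fF: "finite F" using Suc.prems(3) finite_subset finite_ksets by blast
      have cF: "card F = card F1 + card F2" unfolding F1_def F2_def using split_card[OF fF] .
      note p1 = F1_props[OF Suc.prems(3,5,4), folded F1_def]
      note p2 = F2_props[OF Suc.prems(3,5,4), of, folded F2_def]
      have p2': "F2 \<subseteq> ksets {1..n} (k-1)" "dn n (k-1) F2" "intersecting F2"
        "\<And>B. B \<in> F2 \<Longrightarrow> insert (Suc n) B \<in> F \<and> Suc n \<notin> B"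
        using p2 k Suc.prems(1) by auto
      have c1: "card F1 \<le> card (Tset n k m s)"
        using Suc.IH[of k s F1] p1 big Suc.prems by (auto simp: F1_def)
      have cond2: "\<forall>A\<in>F2. s' \<le> card (A \<inter> {1..m})"
      proof
        fix B assume B: "B \<in> F2"
        have fB: "finite B" using p2'(1) B ksets_finite by blast
        have "s \<le> card (insert (Suc n) B \<inter> {1..m})" using p2'(4)[OF B] Suc.prems(6) by auto
        thus "s' \<le> card (B \<inter> {1..m})" using card_insert_inter[OF fB, of "Suc n" m] p2'(4)[OF B]
          by (auto simp: s'_def split: if_splits)
      qed
      have c2: "card F2 \<le> card (Tset n (k-1) m s')"
        using Suc.IH[of "k-1" s' F2] p2' cond2 Suc.prems k by (auto simp: s'_def)
      have "card (Tset (Suc n) k m s) = card (Tset n k m s) + card (Tset n (k-1) m s')"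
        using Tset_split[of "Suc n" k m s] big k by (simp add: s'_def)
      thus ?thesis using cF c1 c2 by simp
    qed
  qed
qed



lemma card_1_insert:
  fixes K :: "nat set"
  assumes "finite K" "1 \<in> K" "m \<ge> 1"
  shows "card (K \<inter> {1..m}) = Suc (card (K \<inter> {2..m}))"
proof -
  have "K \<inter> {1..m} = insert 1 (K \<inter> {2..m})" using assms by auto
  moreover have "1 \<notin> K \<inter> {2..m}" by auto
  ultimately show ?thesis using assms(1) by simp
qed

lemma Kfam_alt:
  assumes "s \<ge> 1" "k \<ge> 1"
  shows "Kfam n k s = Tset n k (k+s-1) s \<union> ksets {2..k+s-1} k"
proof -
  have "{K \<in> ksets {1..n} k. 1 \<in> K \<and> card (K \<inter> {2..k+s-1}) \<ge> s - 1} = Tset n k (k+s-1) s"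
  proof (intro equalityI subsetI)
    fix K assume K: "K \<in> {K \<in> ksets {1..n} k. 1 \<in> K \<and> card (K \<inter> {2..k+s-1}) \<ge> s - 1}"
    hence "finite K" using ksets_finite by blast
    thus "K \<in> Tset n k (k+s-1) s" using K card_1_insert[of K "k+s-1"] assms by (auto simp: Tset_def)
  next
    fix K assume K: "K \<in> Tset n k (k+s-1) s"
    hence "finite K" unfolding Tset_def using ksets_finite by blast
    thus "K \<in> {K \<in> ksets {1..n} k. 1 \<in> K \<and> card (K \<inter> {2..k+s-1}) \<ge> s - 1}"
      using K card_1_insert[of K "k+s-1"] assms by (auto simp: Tset_def)
  qed
  thus ?thesis unfolding Kfam_def by simp
qed

lemma card_Kfam:
  assumes "s \<ge> 1" "k \<ge> 1"
  shows "card (Kfam n k s) = card (Tset n k (k+s-1) s) + card (ksets {2..k+s-1} k)"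
proof -
  have f: "finite (ksets {2..k+s-1} k)"
    by (rule finite_subset[of _ "Pow {2..k+s-1}"]) (auto simp: ksets_def)
  have "Tset n k (k+s-1) s \<inter> ksets {2..k+s-1} k = {}" by (auto simp: Tset_def ksets_def)
  thus ?thesis unfolding Kfam_alt[OF assms] using card_Un_disjoint[OF finite_Tset f] by simp
qed

lemma M_base:
  assumes "n = 2*k" "1 \<le> s" "s \<le> k" "F \<subseteq> ksets {1..n} k" "intersecting F"
    "\<forall>A\<in>F. s \<le> card (A \<inter> {1..k+s-1})"
  shows "card F \<le> card (Kfam n k s)"
proof -
  define m where "m = k+s-1"
  have ks1: "k \<ge> 1" using assms by simp
  have fK: "finite (Kfam n k s)"
    unfolding Kfam_alt[OF assms(2) ks1]
    by (intro finite_UnI finite_Tset, rule finite_subset[of _ "Pow {2..k+s-1}"]) (auto simp: ksets_def)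
  define \<psi> where "\<psi> A = (if A \<in> Kfam n k s then A else {1..n} - A)" for A
  have map: "\<psi> A \<in> Kfam n k s" if A: "A \<in> F" for A
  proof (cases "A \<in> Kfam n k s")
    case True thus ?thesis by (simp add: \<psi>_def)
  next
    case False
    have A1: "A \<subseteq> {1..n}" "card A = k" "s \<le> card (A \<inter> {1..m})" using A assms by (auto simp: ksets_def m_def)
    have fA: "finite A" using A1 finite_subset by blast
    have n1: "1 \<notin> A"
    proof
      assume "1 \<in> A"
      hence "A \<in> Tset n k m s" using A1 by (auto simp: Tset_def ksets_def)
      thus False using False Kfam_alt[OF assms(2) ks1] by (auto simp: m_def)
    qed
    have "\<not> A \<subseteq> {2..m}" using False A1 Kfam_alt[OF assms(2) ks1] by (auto simp: ksets_def m_def)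
    hence "\<not> A \<subseteq> {1..m}" using n1 by (auto simp: subset_iff) (metis atLeastAtMost_iff le_antisym not_less_eq_eq One_nat_def Suc_1)
    hence "A \<inter> {1..m} \<subset> A" by auto
    hence cA: "card (A \<inter> {1..m}) < k" using psubset_card_mono[OF fA] A1 by auto
    define C where "C = {1..n} - A"
    have cC: "card C = k" using A1 fA assms(1) by (simp add: C_def card_Diff_subset)
    have mn: "{1..m} \<subseteq> {1..n}" using assms unfolding m_def by auto
    have "C \<inter> {1..m} = {1..m} - (A \<inter> {1..m})" using mn by (auto simp: C_def)
    hence "card (C \<inter> {1..m}) = m - card (A \<inter> {1..m})" by (simp add: card_Diff_subset)
    hence "s \<le> card (C \<inter> {1..m})" using cA unfolding m_def by linarith
    moreover have "1 \<in> C" using n1 assms by (auto simp: C_def)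
    moreover have "C \<subseteq> {1..n}" by (auto simp: C_def)
    ultimately have "C \<in> Tset n k m s" using cC by (auto simp: Tset_def ksets_def)
    thus ?thesis using False Kfam_alt[OF assms(2) ks1] by (auto simp: \<psi>_def C_def m_def)
  qed
  have inj: "inj_on \<psi> F"
  proof (rule inj_onI)
    fix A B assume A: "A \<in> F" and B: "B \<in> F" and e: "\<psi> A = \<psi> B"
    have sA: "A \<subseteq> {1..n}" "B \<subseteq> {1..n}" using A B assms(4) by (auto simp: ksets_def)
    have AB: "A \<inter> B \<noteq> {}" using A B assms(5) by (auto simp: intersecting_def)
    show "A = B"
    proof (cases "A \<in> Kfam n k s"; cases "B \<in> Kfam n k s")
      assume "A \<in> Kfam n k s" "B \<in> Kfam n k s" thus ?thesis using e by (simp add: \<psi>_def)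
    next
      assume "A \<in> Kfam n k s" "B \<notin> Kfam n k s"
      hence "A = {1..n} - B" using e by (simp add: \<psi>_def)
      thus ?thesis using AB by auto
    next
      assume "A \<notin> Kfam n k s" "B \<in> Kfam n k s"
      hence "B = {1..n} - A" using e by (simp add: \<psi>_def)
      thus ?thesis using AB by auto
    next
      assume "A \<notin> Kfam n k s" "B \<notin> Kfam n k s"
      hence "{1..n} - A = {1..n} - B" using e by (simp add: \<psi>_def)
      thus ?thesis using sA by (metis Diff_Diff_Int inf.absorb_iff2)
    qed
  qed
  have "card F = card (\<psi> ` F)" using card_image[OF inj] by simp
  also have "\<dots> \<le> card (Kfam n k s)" using map by (intro card_mono[OF fK]) auto
  finally show ?thesis .
qed

lemma M_main:
  "\<And>F. 2*k \<le> n \<Longrightarrow> 1 \<le> s \<Longrightarrow> s \<le> k \<Longrightarrow> F \<subseteq> ksets {1..n} k \<Longrightarrow> intersecting F \<Longrightarrow> dn n k F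
    \<Longrightarrow> (\<forall>A\<in>F. s \<le> card (A \<inter> {1..k+s-1})) \<Longrightarrow> card F \<le> card (Kfam n k s)"
proof (induction n)
  case 0
  thus ?case by simp
next
  case (Suc n)
  have k: "k \<ge> 1" using Suc.prems by simp
  show ?case
  proof (cases "Suc n = 2*k")
    case True thus ?thesis using M_base Suc.prems by simp
  next
    case False
    hence big: "2*k + 1 \<le> Suc n" using Suc.prems by simp
    define m where "m = k+s-1"
    define F1 where "F1 = {A\<in>F. Suc n \<notin> A}"
    define F2 where "F2 = (\<lambda>A. A - {Suc n}) ` {A\<in>F. Suc n \<in> A}"
    have fF: "finite F" using Suc.prems(4) finite_subset finite_ksets by blast
    have cF: "card F = card F1 + card F2" unfolding F1_def F2_def using split_card[OF fF] .
    note p1 = F1_props[OF Suc.prems(4,6,5), folded F1_def]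
    note p2 = F2_props[OF Suc.prems(4,6,5), of, folded F2_def]
    have p2': "F2 \<subseteq> ksets {1..n} (k-1)" "dn n (k-1) F2" "intersecting F2"
      "\<And>B. B \<in> F2 \<Longrightarrow> insert (Suc n) B \<in> F \<and> Suc n \<notin> B"
      using p2 k Suc.prems(1) by auto
    have c1: "card F1 \<le> card (Kfam n k s)"
      using Suc.IH[of F1] p1 big Suc.prems by (auto simp: F1_def)
    have mn: "\<not> Suc n \<le> m" using big Suc.prems unfolding m_def by simp
    have cond2: "\<forall>A\<in>F2. s \<le> card (A \<inter> {1..m})"
    proof
      fix B assume B: "B \<in> F2"
      have fB: "finite B" using p2'(1) B ksets_finite by blast
      have "s \<le> card (insert (Suc n) B \<inter> {1..m})" using p2'(4)[OF B] Suc.prems(7) by (auto simp: m_def)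
      thus "s \<le> card (B \<inter> {1..m})" using card_insert_inter[OF fB, of "Suc n" m] p2'(4)[OF B] mn
        by simp
    qed
    have c2: "card F2 \<le> card (Tset n (k-1) m s)"
      using R_main[where n=n and k="k-1" and m=m and s=s and F=F2] p2' cond2 Suc.prems k by (auto simp: m_def)
    have "card (Tset (Suc n) k m s) = card (Tset n k m s) + card (Tset n (k-1) m s)"
      using Tset_split[of "Suc n" k m s] big k mn by simp
    hence "card (Kfam (Suc n) k s) = card (Kfam n k s) + card (Tset n (k-1) m s)"
      using card_Kfam[of s k "Suc n"] card_Kfam[of s k n] Suc.prems(2) k by (simp add: m_def)
    thus ?thesis using cF c1 c2 by simp
  qed
qed



lemma tau_le:
  assumes "T \<subseteq> {1..n}" "\<forall>A\<in>F. T \<inter> A \<noteq> {}"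
  shows "tau n F \<le> card T"
  unfolding tau_def using assms by (intro cInf_lower) auto

lemma tau_ge:
  assumes "\<And>T. T \<subseteq> {1..n} \<Longrightarrow> \<forall>A\<in>F. T \<inter> A \<noteq> {} \<Longrightarrow> s \<le> card T"
    "\<forall>A\<in>F. A \<subseteq> {1..n} \<and> A \<noteq> {}"
  shows "s \<le> tau n F"
  unfolding tau_def
proof (rule cInf_greatest)
  show "{card T |T. T \<subseteq> {1..n} \<and> (\<forall>A\<in>F. T \<inter> A \<noteq> {})} \<noteq> {}"
    using assms(2) by (auto intro!: exI[where x="{1..n}"]) (metis Int_absorb1)
qed (use assms(1) in auto)

lemma card_le_diff_interval:
  fixes D :: "nat set"
  assumes "finite D" "D \<subseteq> {1..m}" "t \<le> m"
  shows "card D - (m - t) \<le> card (D \<inter> {..t})"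
proof -
  have "D - {..t} \<subseteq> {t+1..m}" using assms by auto
  hence "card (D - {..t}) \<le> m - t" using card_mono[of "{t+1..m}"] by fastforce
  moreover have "card D = card (D \<inter> {..t}) + card (D - {..t})"
    using assms(1) by (metis Int_Diff_Un Int_Diff_disjoint card_Un_disjoint finite_Diff finite_Int)
  ultimately show ?thesis by linarith
qed

lemma cond_from_tau:
  assumes "2*k < n" "1 \<le> s" "s \<le> k" "F \<subseteq> ksets {1..n} k" "intersecting F" "dn n k F"
    "s \<le> tau n F"
  shows "\<forall>C\<in>F. s \<le> card (C \<inter> {1..k+s-1})"
proof -
  define m where "m = k+s-1"
  have "\<exists>A\<in>F. {1..s-1} \<inter> A = {}"
  proof (rule ccontr)
    assume "\<not> ?thesis"
    hence "tau n F \<le> card {1..s-1}" using assms by (intro tau_le) auto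
    thus False using assms(2,7) by simp
  qed
  then obtain A where A: "A \<in> F" "{1..s-1} \<inter> A = {}" by blast
  have A1: "A \<subseteq> {1..n}" "card A = k" using A assms(4) by (auto simp: ksets_def)
  have fA: "finite A" using A1 finite_subset by blast
  have As: "A \<subseteq> {s..n}"
  proof
    fix x assume x: "x \<in> A"
    hence x1: "1 \<le> x" "x \<le> n" using A1 by auto
    have "x \<notin> {1..s-1}" using A(2) x by blast
    hence "s \<le> x" using x1 by simp
    thus "x \<in> {s..n}" using x1 by simp
  qed
  define B0 where "B0 = {s..m}"
  have cB0: "card B0 = k" using assms unfolding B0_def m_def by simp
  have B0k: "B0 \<in> ksets {1..n} k" using cB0 assms unfolding B0_def m_def ksets_def by auto
  have "sh B0 A" unfolding sh_def
  proof (intro conjI allI)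
    show "card B0 = card A" using cB0 A1 by simp
  next
    fix t
    show "card (A \<inter> {..t}) \<le> card (B0 \<inter> {..t})"
    proof (cases "t \<le> m")
      case True
      have "A \<inter> {..t} \<subseteq> B0 \<inter> {..t}" using As True by (auto simp: B0_def)
      thus ?thesis by (intro card_mono) (auto simp: B0_def)
    next
      case False
      hence "B0 \<inter> {..t} = B0" by (auto simp: B0_def)
      moreover have "card (A \<inter> {..t}) \<le> card A" using fA by (intro card_mono) auto
      ultimately show ?thesis using cB0 A1 by simp
    qed
  qed
  hence B0F: "B0 \<in> F" using assms(6) B0k A(1) by (auto simp: dn_def)
  show ?thesis unfolding m_def[symmetric]
  proof
    fix C assume C: "C \<in> F"
    show "s \<le> card (C \<inter> {1..m})"
    proof (rule ccontr)
      assume "\<not> ?thesis"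
      hence lt: "card (C \<inter> {1..m}) < s" by simp
      have "card ({1..m} - C) = m - card ({1..m} \<inter> C)" by (simp add: card_Diff_subset_Int)
      also have "{1..m} \<inter> C = C \<inter> {1..m}" by auto
      finally have "k \<le> card ({1..m} - C)" using lt unfolding m_def by linarith
      then obtain D where D: "D \<subseteq> {1..m} - C" "card D = k" by (meson obtain_subset_with_card_n)
      have fD: "finite D" using D(1) finite_subset by blast
      have Dm: "D \<subseteq> {1..m}" using D by auto
      have "{1..m} \<subseteq> {1..n}" using assms unfolding m_def by auto
      hence Dk: "D \<in> ksets {1..n} k" using Dm D by (auto simp: ksets_def)
      have "sh D B0" unfolding sh_def
      proof (intro conjI allI)
        show "card D = card B0" using D cB0 by simp
      next
        fix t
        show "card (B0 \<inter> {..t}) \<le> card (D \<inter> {..t})"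
        proof (cases "t \<le> m")
          case False
          hence "D \<inter> {..t} = D" using Dm by auto
          moreover have "card (B0 \<inter> {..t}) \<le> card B0" by (intro card_mono) (auto simp: B0_def)
          ultimately show ?thesis using cB0 D by simp
        next
          case True
          have "B0 \<inter> {..t} = {s..t}" using True by (auto simp: B0_def)
          hence "card (B0 \<inter> {..t}) = Suc t - s" by simp
          moreover have "k - (m - t) \<le> card (D \<inter> {..t})"
            using card_le_diff_interval[OF fD Dm True] D by simp
          ultimately show ?thesis using True assms(2) unfolding m_def by linarith
        qed
      qed
      hence "D \<in> F" using assms(6) Dk B0F by (auto simp: dn_def)
      moreover have "D \<inter> C = {}" using D by auto
      ultimately show False using C assms(5) by (auto simp: intersecting_def)
    qed
  qed
qed

lemma disjoint_by_card:
  fixes X Y Z :: "nat set"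
  assumes "finite Z" "X \<subseteq> Z" "Y \<subseteq> Z" "card Z < card X + card Y"
  shows "X \<inter> Y \<noteq> {}"
proof
  assume "X \<inter> Y = {}"
  hence "card (X \<union> Y) = card X + card Y" using assms by (meson card_Un_disjoint finite_subset)
  moreover have "card (X \<union> Y) \<le> card Z" using assms by (intro card_mono) auto
  ultimately show False using assms(4) by simp
qed

lemma Kfam_sub: assumes "2*k < n" "1 \<le> s" "s \<le> k" shows "Kfam n k s \<subseteq> ksets {1..n} k"
proof -
  have k1: "k \<ge> 1" using assms by simp
  have "{2..k+s-1} \<subseteq> {1..n}" using assms by auto
  hence "ksets {2..k+s-1} k \<subseteq> ksets {1..n} k" unfolding ksets_def by blast
  moreover have "Tset n k (k+s-1) s \<subseteq> ksets {1..n} k" unfolding Tset_def by blast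
  ultimately show ?thesis unfolding Kfam_alt[OF assms(2) k1] by blast
qed

lemma Kfam_intersecting: assumes "2*k < n" "1 \<le> s" "s \<le> k" shows "intersecting (Kfam n k s)"
proof -
  define m where "m = k+s-1"
  have k1: "k \<ge> 1" using assms by simp
  have cZ: "card {2..m} = k + s - 2" unfolding m_def by simp
  have one: "A \<inter> B \<noteq> {}" if A: "A \<in> Tset n k m s" and B: "B \<in> ksets {2..m} k" for A B
  proof -
    have fA: "finite A" using A unfolding Tset_def using ksets_finite by blast
    have "1 \<in> A" using A by (simp add: Tset_def)
    moreover have "m \<ge> 1" using k1 assms(2) by (simp add: m_def)
    ultimately have "card (A \<inter> {1..m}) = Suc (card (A \<inter> {2..m}))"
      using card_1_insert[OF fA] by blast
    hence "s - 1 \<le> card (A \<inter> {2..m})" using A by (auto simp: Tset_def)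
    hence "(A \<inter> {2..m}) \<inter> B \<noteq> {}"
      using B cZ k1 assms by (intro disjoint_by_card[of "{2..m}"]) (auto simp: ksets_def)
    thus ?thesis by auto
  qed
  show ?thesis unfolding intersecting_def Kfam_alt[OF assms(2) k1] m_def[symmetric]
  proof (intro ballI)
    fix A B assume A: "A \<in> Tset n k m s \<union> ksets {2..m} k" and B: "B \<in> Tset n k m s \<union> ksets {2..m} k"
    show "A \<inter> B \<noteq> {}"
    proof (cases "A \<in> Tset n k m s"; cases "B \<in> Tset n k m s")
      assume "A \<in> Tset n k m s" "B \<in> Tset n k m s" thus ?thesis by (auto simp: Tset_def)
    next
      assume "A \<in> Tset n k m s" "B \<notin> Tset n k m s" thus ?thesis using one B by auto
    next
      assume "A \<notin> Tset n k m s" "B \<in> Tset n k m s" thus ?thesis using one A by auto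
    next
      assume "A \<notin> Tset n k m s" "B \<notin> Tset n k m s"
      hence "A \<in> ksets {2..m} k" "B \<in> ksets {2..m} k" using A B by auto
      thus ?thesis using cZ assms by (intro disjoint_by_card[of "{2..m}"]) (auto simp: ksets_def m_def)
    qed
  qed
qed



lemma inter_atMost: "X \<subseteq> {1..n} \<Longrightarrow> X \<inter> {..t} = X \<inter> {1..(t::nat)}"
  by auto

lemma Kfam_dn: assumes "2*k < n" "1 \<le> s" "s \<le> k" shows "dn n k (Kfam n k s)"
  unfolding dn_def
proof (intro ballI impI)
  define m where "m = k+s-1"
  have k1: "k \<ge> 1" using assms by simp
  fix A B assume A: "A \<in> ksets {1..n} k" and B: "B \<in> Kfam n k s" and sAB: "sh A B"
  have A1: "A \<subseteq> {1..n}" "card A = k" using A by (auto simp: ksets_def)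
  have fA: "finite A" using A1 finite_subset by blast
  have cnt: "card (B \<inter> {..t}) \<le> card (A \<inter> {..t})" for t using sAB by (simp add: sh_def)
  have BK: "B \<in> Tset n k m s \<or> B \<in> ksets {2..m} k" using B Kfam_alt[OF assms(2) k1] by (auto simp: m_def)
  have Bn: "B \<subseteq> {1..n}" using B Kfam_sub[OF assms] by (auto simp: ksets_def)
  show "A \<in> Kfam n k s"
  proof (cases "B \<in> Tset n k m s")
    case True
    have "1 \<in> B" using True by (simp add: Tset_def)
    hence "card (B \<inter> {..1}) \<ge> 1" using Bn
      by (metis IntI One_nat_def Suc_leI atMost_iff card_gt_0_iff empty_iff finite_Int finite_atMost order_refl)
    hence "card (A \<inter> {..1}) \<ge> 1" using cnt[of 1] by simp
    hence "A \<inter> {..1} \<noteq> {}" by auto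
    then obtain x where "x \<in> A" "x \<le> 1" by auto
    hence "1 \<in> A" using A1 by (metis atLeastAtMost_iff le_antisym subsetD)
    moreover have "s \<le> card (A \<inter> {1..m})"
    proof -
      have "s \<le> card (B \<inter> {1..m})" using True by (simp add: Tset_def)
      also have "\<dots> = card (B \<inter> {..m})" using inter_atMost[OF Bn] by simp
      also have "\<dots> \<le> card (A \<inter> {..m})" by (rule cnt)
      also have "\<dots> = card (A \<inter> {1..m})" using inter_atMost[OF A1(1)] by simp
      finally show ?thesis .
    qed
    ultimately have "A \<in> Tset n k m s" using A by (simp add: Tset_def)
    thus ?thesis using Kfam_alt[OF assms(2) k1] by (simp add: m_def)
  next
    case False
    hence B2: "B \<subseteq> {2..m}" "card B = k" using BK by (auto simp: ksets_def)
    hence "B \<inter> {..m} = B" by auto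
    hence "k \<le> card (A \<inter> {..m})" using cnt[of m] B2 by simp
    hence "A \<inter> {..m} = A" using fA A1 by (metis Int_lower1 card_mono card_seteq finite_Int)
    have Am: "A \<subseteq> {1..m}"
    proof
      fix x assume x: "x \<in> A"
      hence "x \<le> m" using \<open>A \<inter> {..m} = A\<close> by auto
      moreover have "1 \<le> x" using x A1 by auto
      ultimately show "x \<in> {1..m}" by simp
    qed
    show ?thesis
    proof (cases "1 \<in> A")
      case True
      have "A \<inter> {1..m} = A" using Am by auto
      hence "A \<in> Tset n k m s" using True A A1 assms by (simp add: Tset_def)
      thus ?thesis using Kfam_alt[OF assms(2) k1] by (simp add: m_def)
    next
      case False
      hence "A \<subseteq> {2..m}" using Am
        by (auto simp: subset_iff) (metis atLeastAtMost_iff One_nat_def Suc_1 Suc_leI le_neq_implies_less)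
      hence "A \<in> ksets {2..m} k" using A1 by (simp add: ksets_def)
      thus ?thesis using Kfam_alt[OF assms(2) k1] by (simp add: m_def)
    qed
  qed
qed

lemma tau_Kfam: assumes "2*k < n" "1 \<le> s" "s \<le> k" shows "s \<le> tau n (Kfam n k s)"
proof (rule tau_ge)
  define m where "m = k+s-1"
  have k1: "k \<ge> 1" using assms by simp
  have KK: "Kfam n k s = Tset n k m s \<union> ksets {2..m} k" using Kfam_alt[OF assms(2) k1] by (simp add: m_def)
  have mn: "{1..m} \<subseteq> {1..n}" using assms by (auto simp: m_def)
  show "\<forall>A\<in>Kfam n k s. A \<subseteq> {1..n} \<and> A \<noteq> {}"
    using Kfam_sub[OF assms] k1 by (auto simp: ksets_def)
  fix T assume T: "T \<subseteq> {1..n}" and hit: "\<forall>A\<in>Kfam n k s. T \<inter> A \<noteq> {}"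
  have fT: "finite T" using T finite_subset by blast
  show "s \<le> card T"
  proof (rule ccontr)
    assume "\<not> ?thesis"
    hence lt: "card T < s" by simp
    have cZ: "card {2..m} = k + s - 2" unfolding m_def by simp
    have cD: "card ({2..m} - T) = card {2..m} - card ({2..m} \<inter> T)" by (simp add: card_Diff_subset_Int)
    show False
    proof (cases "1 \<in> T")
      case False
      have "card ({2..m} \<inter> T) \<le> card T" using fT by (intro card_mono) auto
      hence "k - 1 \<le> card ({2..m} - T)" using cD cZ lt assms by linarith
      then obtain X where X: "X \<subseteq> {2..m} - T" "card X = k - 1" by (meson obtain_subset_with_card_n)
      have fX: "finite X" using X(1) finite_subset by blast
      have n1: "1 \<notin> X" using X by auto
      define A where "A = insert 1 X"
      have cA: "card A = k" using fX n1 X k1 by (simp add: A_def)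
      have Am: "A \<subseteq> {1..m}" using X k1 assms by (auto simp: A_def m_def)
      hence "A \<inter> {1..m} = A" by auto
      hence "A \<in> Tset n k m s" using Am mn cA assms by (auto simp: Tset_def ksets_def A_def)
      hence "A \<in> Kfam n k s" using KK by simp
      moreover have "T \<inter> A = {}" using X False by (auto simp: A_def)
      ultimately show False using hit by blast
    next
      case True
      have "{2..m} \<inter> T \<subseteq> T - {1}" by auto
      hence "card ({2..m} \<inter> T) \<le> card (T - {1})" using fT by (intro card_mono) auto
      also have "\<dots> = card T - 1" using True fT by simp
      finally have c1: "card ({2..m} \<inter> T) \<le> card T - 1" .
      have "card T \<ge> 1" using True fT by (metis One_nat_def Suc_leI card_gt_0_iff empty_iff)
      hence "k \<le> card ({2..m} - T)" using c1 cD cZ lt assms by linarith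
      then obtain X where X: "X \<subseteq> {2..m} - T" "card X = k" by (meson obtain_subset_with_card_n)
      have "X \<in> ksets {2..m} k" using X by (auto simp: ksets_def)
      hence "X \<in> Kfam n k s" using KK by simp
      moreover have "T \<inter> X = {}" using X by auto
      ultimately show False using hit by blast
    qed
  qed
qed

theorem mainTheorem19:
  fixes n k s :: nat
  assumes "n > 2 * k" and "1 \<le> s" and "s \<le> k"
  shows "g n k s = card (Kfam n k s)"
proof -
  define S where "S = {card F | F. F \<subseteq> ksets {1..n} k \<and> intersecting F \<and> initial n k F
                              \<and> tau n F \<ge> s}"
  have "finite (card ` Pow (ksets {1..n} k))" using finite_ksets by simp
  hence fin: "finite S"
    by (rule finite_subset[rotated]) (auto simp: S_def)
  have mem: "card (Kfam n k s) \<in> S"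
    unfolding S_def using Kfam_sub[OF assms] Kfam_intersecting[OF assms] tau_Kfam[OF assms]
      initial_dn[OF Kfam_sub[OF assms]] Kfam_dn[OF assms] by blast
  have ub: "y \<le> card (Kfam n k s)" if "y \<in> S" for y
  proof -
    obtain F where F: "y = card F" "F \<subseteq> ksets {1..n} k" "intersecting F" "initial n k F" "tau n F \<ge> s"
      using \<open>y \<in> S\<close> unfolding S_def by blast
    have d: "dn n k F" using initial_dn[OF F(2)] F(4) by simp
    have c: "\<forall>A\<in>F. s \<le> card (A \<inter> {1..k+s-1})" using cond_from_tau[OF assms F(2,3) d F(5)] .
    show ?thesis using M_main[of k n s F] assms F d c by simp
  qed
  have "g n k s = Max S" unfolding g_def S_def by simp
  also have "\<dots> = card (Kfam n k s)" using fin mem ub by (intro Max_eqI) auto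
  finally show ?thesis .
qed


end
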